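(* Let $\mathcal N:\mathbb R^{n_0}\to\mathbb R^{n_L}$ be a random fully connected ReLU network as described in the context, let $\gamma:[0,1]\to\mathbb R^{n_0}$ be a smooth unit-speed curve and $M=\gamma([0,1])$ (so $M$ has unit length). Then for every $t\in[0,1]$ the Jacobian $J_{\gamma(t)}$ exists almost surely, and for every integer $m\ge1$, $$\mathbb E\big[\mathrm{len}(\mathcal N(M))^m\big]\le\int_0^1\mathbb E\big[\|J_{\gamma(t)}\gamma'(t)\|^m\big]\,dt.$$
   Context: Fix integers $L\ge1$ and $n_0,\dots,n_L\ge1$. The network $\mathcal N:\mathbb R^{n_0}\to\mathbb R^{n_L}$ with hidden widths $n_1,\dots,n_{L-1}$ is defined by $z^{(1)}(x)=W^{(1)}x+b^{(1)}$, $z^{(\ell)}(x)=W^{(\ell)}\,\mathrm{ReLU}(z^{(\ell-1)}(x))+b^{(\ell)}$ for $2\le\ell\le L$, and $\mathcal N(x)=z^{(L)}(x)$, where $\mathrm{ReLU}(t)=\max(t,0)$ is applied componentwise, $W^{(\ell)}$ is an $n_\ell\times n_{\ell-1}$ matrix and $b^{(\ell)}\in\mathbb R^{n_\ell}$. All entries of all $W^{(\ell)}$ and $b^{(\ell)}$ are independent centered Gaussian random variables with $\mathrm{Var}(W^{(\ell)}_{ij})=2/n_{\ell-1}$ for $1\le\ell\le L-1$, $\mathrm{Var}(W^{(L)}_{ij})=1/n_{L-1}$, and $\mathrm{Var}(b^{(\ell)}_j)=C_b$ for a fixed constant $C_b>0$. The input-output Jacobian at $x$ is $J_x=(\partial\mathcal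 N_i/\partial x_j(x))_{1\le i\le n_L,1\le j\le n_0}$ where it exists. $\mathrm{len}(\mathcal N(M)):=\int_0^1\|(\mathcal N\circ\gamma)'(t)\|\,dt$, the length of the Lipschitz path $\mathcal N\circ\gamma$. *)

theory Defs
  imports "HOL-Probability.Probability"
begin

text \<open>Parameters of the network are indexed by
  Inl (l, i, j) : entry W^(l)_{ij}  and  Inr (l, j) : entry b^(l)_j.
  Vectors in R^k are functions nat => real; only the coordinates < k matter.\<close>

type_synonym param_idx = "(nat \<times> nat \<times> nat) + (nat \<times> nat)"

definition relu :: "real \<Rightarrow> real" where
  "relu t = max t 0"

definition param_index :: "(nat \<Rightarrow> nat) \<Rightarrow> nat \<Rightarrow> param_idx set" where
  "param_index n L =
     {Inl (l, i, j) | l i j. 1 \<le> l \<and> l \<le> L \<and> i < n l \<and> j < n (l - 1)}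
   \<union> {Inr (l, j) | l j. 1 \<le> l \<and> l \<le> L \<and> j < n l}"

definition param_var :: "(nat \<Rightarrow> nat) \<Rightarrow> nat \<Rightarrow> real \<Rightarrow> param_idx \<Rightarrow> real" where
  "param_var n L Cb p = (case p of
      Inl (l, i, j) \<Rightarrow> (if l \<le> L - 1 then 2 / real (n (l - 1)) else 1 / real (n (L - 1)))
    | Inr (l, j) \<Rightarrow> Cb)"

definition relu_net_measure :: "(nat \<Rightarrow> nat) \<Rightarrow> nat \<Rightarrow> real \<Rightarrow> (param_idx \<Rightarrow> real) measure" where
  "relu_net_measure n L Cb =
     PiM (param_index n L) (\<lambda>p. density lborel (normal_density 0 (sqrt (param_var n L Cb p))))"

text \<open>preact n \<theta> l x = z^(l)(x) for l \<ge> 1 (preact n \<theta> 0 x = x is the input).\<close>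
fun preact :: "(nat \<Rightarrow> nat) \<Rightarrow> (param_idx \<Rightarrow> real) \<Rightarrow> nat \<Rightarrow> (nat \<Rightarrow> real) \<Rightarrow> (nat \<Rightarrow> real)" where
  "preact n \<theta> 0 x = x"
| "preact n \<theta> (Suc l) x =
     (\<lambda>j. (\<Sum>k<n l. \<theta> (Inl (Suc l, j, k)) * (if l = 0 then x k else relu (preact n \<theta> l x k)))
          + \<theta> (Inr (Suc l, j)))"

definition net :: "(nat \<Rightarrow> nat) \<Rightarrow> nat \<Rightarrow> (param_idx \<Rightarrow> real) \<Rightarrow> (nat \<Rightarrow> real) \<Rightarrow> (nat \<Rightarrow> real)" where
  "net n L \<theta> x = preact n \<theta> L x"

definition vnorm :: "nat \<Rightarrow> (nat \<Rightarrow> real) \<Rightarrow> real" where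
  "vnorm k v = sqrt (\<Sum>i<k. (v i)\<^sup>2)"

definition partial_at :: "((nat \<Rightarrow> real) \<Rightarrow> (nat \<Rightarrow> real)) \<Rightarrow> (nat \<Rightarrow> real) \<Rightarrow> nat \<Rightarrow> nat \<Rightarrow> real \<Rightarrow> real" where
  "partial_at F x i j = (\<lambda>s. F (x(j := x j + s)) i)"

definition jacobian_exists :: "nat \<Rightarrow> nat \<Rightarrow> ((nat \<Rightarrow> real) \<Rightarrow> (nat \<Rightarrow> real)) \<Rightarrow> (nat \<Rightarrow> real) \<Rightarrow> bool" where
  "jacobian_exists n0 nL F x \<longleftrightarrow>
     (\<forall>i<nL. \<forall>j<n0. partial_at F x i j differentiable (at 0))"

definition jacobian :: "((nat \<Rightarrow> real) \<Rightarrow> (nat \<Rightarrow> real)) \<Rightarrow> (nat \<Rightarrow> real) \<Rightarrow> nat \<Rightarrow> nat \<Rightarrow> real" where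
  "jacobian F x i j = deriv (partial_at F x i j) 0"

definition jac_apply :: "nat \<Rightarrow> ((nat \<Rightarrow> real) \<Rightarrow> (nat \<Rightarrow> real)) \<Rightarrow> (nat \<Rightarrow> real) \<Rightarrow> (nat \<Rightarrow> real) \<Rightarrow> (nat \<Rightarrow> real)" where
  "jac_apply n0 F x v = (\<lambda>i. \<Sum>j<n0. jacobian F x i j * v j)"

definition vderiv :: "(real \<Rightarrow> real) \<Rightarrow> real \<Rightarrow> real" where
  "vderiv f t = (SOME D. (f has_real_derivative D) (at t within {0..1}))"

definition smooth_curve :: "nat \<Rightarrow> (nat \<Rightarrow> real \<Rightarrow> real) \<Rightarrow> bool" where
  "smooth_curve n0 \<gamma> \<longleftrightarrow>
     (\<forall>k<n0. \<exists>D :: nat \<Rightarrow> real \<Rightarrow> real. D 0 = \<gamma> k \<and>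
        (\<forall>r. \<forall>t\<in>{0..1}. (D r has_real_derivative D (Suc r) t) (at t within {0..1})))"

definition unit_speed :: "nat \<Rightarrow> (nat \<Rightarrow> real \<Rightarrow> real) \<Rightarrow> bool" where
  "unit_speed n0 \<gamma> \<longleftrightarrow> (\<forall>t\<in>{0..1}. vnorm n0 (\<lambda>k. vderiv (\<gamma> k) t) = 1)"

definition curve_pt :: "(nat \<Rightarrow> real \<Rightarrow> real) \<Rightarrow> real \<Rightarrow> (nat \<Rightarrow> real)" where
  "curve_pt \<gamma> t = (\<lambda>k. \<gamma> k t)"

definition curve_vel :: "(nat \<Rightarrow> real \<Rightarrow> real) \<Rightarrow> real \<Rightarrow> (nat \<Rightarrow> real)" where
  "curve_vel \<gamma> t = (\<lambda>k. vderiv (\<gamma> k) t)"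

text \<open>len(F(M)) = integral over [0,1] of |(F o gamma)'(t)|.\<close>
definition image_len :: "nat \<Rightarrow> ((nat \<Rightarrow> real) \<Rightarrow> (nat \<Rightarrow> real)) \<Rightarrow> (nat \<Rightarrow> real \<Rightarrow> real) \<Rightarrow> ennreal" where
  "image_len nL F \<gamma> =
     (\<integral>\<^sup>+ t\<in>{0..1}. ennreal (vnorm nL (\<lambda>i. vderiv (\<lambda>s. F (curve_pt \<gamma> s) i) t)) \<partial>lborel)"

end

theory Submission
  imports Defs
begin


definition good :: "(nat \<Rightarrow> nat) \<Rightarrow> nat \<Rightarrow> (param_idx \<Rightarrow> real) \<Rightarrow> (nat \<Rightarrow> real) \<Rightarrow> bool" where
  "good n L \<theta> x \<longleftrightarrow> (\<forall>l. 1 \<le> l \<and> l < L \<longrightarrow> (\<forall>k<n l. preact n \<theta> l x k \<noteq> 0))"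

fun DA :: "(nat \<Rightarrow> nat) \<Rightarrow> (param_idx \<Rightarrow> real) \<Rightarrow> nat \<Rightarrow> (nat \<Rightarrow> real) \<Rightarrow> nat \<Rightarrow> nat \<Rightarrow> real" where
  "DA n \<theta> 0 x i k = (if i = k then 1 else 0)"
| "DA n \<theta> (Suc l) x j k = (\<Sum>k'<n l. \<theta> (Inl (Suc l, j, k')) *
      (if l = 0 then DA n \<theta> 0 x k' k else if preact n \<theta> l x k' > 0 then DA n \<theta> l x k' k else 0))"

fun CA :: "(nat \<Rightarrow> nat) \<Rightarrow> (param_idx \<Rightarrow> real) \<Rightarrow> nat \<Rightarrow> (nat \<Rightarrow> real) \<Rightarrow> nat \<Rightarrow> real" where
  "CA n \<theta> 0 x i = 0"
| "CA n \<theta> (Suc l) x j = (\<Sum>k'<n l. \<theta> (Inl (Suc l, j, k')) *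
      (if l = 0 then 0 else if preact n \<theta> l x k' > 0 then CA n \<theta> l x k' else 0)) + \<theta> (Inr (Suc l, j))"

lemma alg_helper:
  fixes t :: "nat \<Rightarrow> real" and A :: "nat \<Rightarrow> nat \<Rightarrow> real"
  shows "(\<Sum>k'\<in>K. t k' * (if P k' then (\<Sum>k\<in>I. A k' k * y k) + C k' else 0)) + b =
         (\<Sum>k\<in>I. (\<Sum>k'\<in>K. t k' * (if P k' then A k' k else 0)) * y k) + ((\<Sum>k'\<in>K. t k' * (if P k' then C k' else 0)) + b)"
proof -
  have "(\<Sum>k'\<in>K. t k' * (if P k' then (\<Sum>k\<in>I. A k' k * y k) + C k' else 0))
     = (\<Sum>k'\<in>K. (\<Sum>k\<in>I. t k' * (if P k' then A k' k else 0) * y k) + t k' * (if P k' then C k' else 0))"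
    by (rule sum.cong) (auto simp: sum_distrib_left algebra_simps)
  also have "\<dots> = (\<Sum>k\<in>I. (\<Sum>k'\<in>K. t k' * (if P k' then A k' k else 0)) * y k) + (\<Sum>k'\<in>K. t k' * (if P k' then C k' else 0))"
    by (simp add: sum.distrib sum_distrib_right sum.swap[of _ K])
  finally show ?thesis by simp
qed

lemma affine_ev:
  fixes Y :: "'a \<Rightarrow> nat \<Rightarrow> real"
  assumes "l \<le> L" "good n L \<theta> x" "\<forall>k<n 0. ((\<lambda>s. Y s k) \<longlongrightarrow> x k) F"
  shows "eventually (\<lambda>s. \<forall>i<n l. preact n \<theta> l (Y s) i = (\<Sum>k<n 0. DA n \<theta> l x i k * Y s k) + CA n \<theta> l x i) F"
  using assms(1,3)
proof (induction l arbitrary: Y F)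
  case 0
  show ?case
  proof (rule always_eventually, intro allI impI)
    fix s i assume "i < n 0"
    then have "(\<Sum>k<n 0. DA n \<theta> 0 x i k * Y s k) = Y s i"
    proof -
      have "(\<Sum>k<n 0. DA n \<theta> 0 x i k * Y s k) = (\<Sum>k<n 0. if i = k then Y s k else 0)"
        by (rule sum.cong) auto
      also have "\<dots> = Y s i" using \<open>i < n 0\<close> by (simp add: sum.delta)
      finally show ?thesis .
    qed
    then show "preact n \<theta> 0 (Y s) i = (\<Sum>k<n 0. DA n \<theta> 0 x i k * Y s k) + CA n \<theta> 0 x i" by simp
  qed
next
  case (Suc l)
  show ?case
  proof (cases "l = 0")
    case True
    show ?thesis
    proof (rule always_eventually, intro allI impI)
      fix s i
      have "DA n \<theta> (Suc 0) x i k = (if k < n 0 then \<theta> (Inl (Suc 0, i, k)) else 0)" for k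
      proof -
        have "DA n \<theta> (Suc 0) x i k = (\<Sum>k'<n 0. if k' = k then \<theta> (Inl (Suc 0, i, k')) else 0)"
          by (simp only: DA.simps) (rule sum.cong, auto)
        then show ?thesis by (simp add: sum.delta')
      qed
      then have "(\<Sum>k<n 0. DA n \<theta> (Suc 0) x i k * Y s k) = (\<Sum>k'<n 0. \<theta> (Inl (Suc 0, i, k')) * Y s k')"
        by simp
      then show "preact n \<theta> (Suc l) (Y s) i = (\<Sum>k<n 0. DA n \<theta> (Suc l) x i k * Y s k) + CA n \<theta> (Suc l) x i"
        using True by simp
    qed
  next
    case False
    have IH: "eventually (\<lambda>s. \<forall>i<n l. preact n \<theta> l (Y s) i = (\<Sum>k<n 0. DA n \<theta> l x i k * Y s k) + CA n \<theta> l x i) F"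
      using Suc.IH[OF _ Suc.prems(2)] Suc.prems(1) by simp
    have atx: "\<forall>i<n l. preact n \<theta> l x i = (\<Sum>k<n 0. DA n \<theta> l x i k * x k) + CA n \<theta> l x i"
    proof -
      have "\<forall>k<n 0. ((\<lambda>s. (\<lambda>_::'a. x) s k) \<longlongrightarrow> x k) (principal UNIV)" by simp
      from Suc.IH[OF _ this] Suc.prems show ?thesis by (simp add: eventually_principal)
    qed
    have nz: "\<forall>i<n l. preact n \<theta> l x i \<noteq> 0"
      using assms(2) Suc.prems False unfolding good_def by auto
    have sgn: "eventually (\<lambda>s. relu (preact n \<theta> l (Y s) i) = (if preact n \<theta> l x i > 0 then preact n \<theta> l (Y s) i else 0)) F"
      if i: "i < n l" for i
    proof -
      have lim: "((\<lambda>s. (\<Sum>k<n 0. DA n \<theta> l x i k * Y s k) + CA n \<theta> l x i) \<longlongrightarrow> preact n \<theta> l x i) F"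
        unfolding atx[rule_format, OF i]
        using Suc.prems(2) by (intro tendsto_intros) auto
      have ev2: "eventually (\<lambda>s. preact n \<theta> l (Y s) i = (\<Sum>k<n 0. DA n \<theta> l x i k * Y s k) + CA n \<theta> l x i) F"
        using IH i by (auto elim: eventually_mono)
      have lim2: "((\<lambda>s. preact n \<theta> l (Y s) i) \<longlongrightarrow> preact n \<theta> l x i) F"
        using tendsto_cong[OF ev2] lim by simp
      show ?thesis
      proof (cases "preact n \<theta> l x i > 0")
        case True
        from order_tendstoD(1)[OF lim2 True] show ?thesis
          by eventually_elim (use True in \<open>auto simp: relu_def\<close>)
      next
        case f: False
        with nz i have "preact n \<theta> l x i < 0" by force
        from order_tendstoD(2)[OF lim2 this] show ?thesis
          by eventually_elim (use f in \<open>auto simp: relu_def\<close>)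
      qed
    qed
    have sgnall: "eventually (\<lambda>s. \<forall>i\<in>{..<n l}. relu (preact n \<theta> l (Y s) i) = (if preact n \<theta> l x i > 0 then preact n \<theta> l (Y s) i else 0)) F"
      by (rule eventually_ball_finite) (use sgn in auto)
    from IH sgnall show ?thesis
    proof eventually_elim
      case (elim s)
      show ?case
      proof (intro allI impI)
        fix j assume "j < n (Suc l)"
        have "preact n \<theta> (Suc l) (Y s) j = (\<Sum>k'<n l. \<theta> (Inl (Suc l, j, k')) * (if preact n \<theta> l x k' > 0 then (\<Sum>k<n 0. DA n \<theta> l x k' k * Y s k) + CA n \<theta> l x k' else 0)) + \<theta> (Inr (Suc l, j))"
        proof -
          have r: "relu (preact n \<theta> l (Y s) k') = (if preact n \<theta> l x k' > 0 then (\<Sum>k<n 0. DA n \<theta> l x k' k * Y s k) + CA n \<theta> l x k' else 0)"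
            if "k' < n l" for k'
          proof -
            have a: "relu (preact n \<theta> l (Y s) k') = (if preact n \<theta> l x k' > 0 then preact n \<theta> l (Y s) k' else 0)"
              using elim(2) that by blast
            have b: "preact n \<theta> l (Y s) k' = (\<Sum>k<n 0. DA n \<theta> l x k' k * Y s k) + CA n \<theta> l x k'"
              using elim(1) that by blast
            show ?thesis using a b by simp
          qed
          have "(\<Sum>k'<n l. \<theta> (Inl (Suc l, j, k')) * relu (preact n \<theta> l (Y s) k')) = (\<Sum>k'<n l. \<theta> (Inl (Suc l, j, k')) * (if preact n \<theta> l x k' > 0 then (\<Sum>k<n 0. DA n \<theta> l x k' k * Y s k) + CA n \<theta> l x k' else 0))"
            by (rule sum.cong) (simp_all add: r)
          then show ?thesis using False by simp
        qed
        also have "\<dots> = (\<Sum>k<n 0. DA n \<theta> (Suc l) x j k * Y s k) + CA n \<theta> (Suc l) x j"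
          using False by (simp add: alg_helper)
        finally show "preact n \<theta> (Suc l) (Y s) j = (\<Sum>k<n 0. DA n \<theta> (Suc l) x j k * Y s k) + CA n \<theta> (Suc l) x j" .
      qed
    qed
  qed
qed

lemma vderiv_eq:
  assumes t: "t \<in> {0..1}" and D: "(f has_real_derivative D) (at t within {0..1})"
  shows "vderiv f t = D"
proof -
  have "\<exists>D. (f has_real_derivative D) (at t within {0..1})" using D by blast
  then have s: "(f has_real_derivative vderiv f t) (at t within {0..1})"
    unfolding vderiv_def by (rule someI_ex)
  show ?thesis
    using vector_derivative_unique_within_closed_interval[of 0 1 t f "vderiv f t" D] s D t
    by (simp add: cbox_interval has_real_derivative_iff_has_vector_derivative)
qed

lemma jac_good:
  assumes g: "good n L \<theta> x" and i: "i < n L" and j: "j < n 0"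
  shows "(partial_at (net n L \<theta>) x i j has_real_derivative DA n \<theta> L x i j) (at 0)"
proof -
  define Y where "Y = (\<lambda>s::real. x(j := x j + s))"
  have lim: "\<forall>k<n 0. ((\<lambda>s. Y s k) \<longlongrightarrow> x k) (nhds 0)"
  proof (intro allI impI)
    fix k
    show "((\<lambda>s. Y s k) \<longlongrightarrow> x k) (nhds 0)"
    proof (cases "k = j")
      case True
      have "((\<lambda>s. x j + s) \<longlongrightarrow> x j + 0) (nhds (0::real))"
        by (intro tendsto_intros) (simp add: filterlim_ident)
      then show ?thesis using True by (simp add: Y_def)
    qed (simp add: Y_def)
  qed
  have ev: "eventually (\<lambda>s. \<forall>i<n L. preact n \<theta> L (Y s) i = (\<Sum>k<n 0. DA n \<theta> L x i k * Y s k) + CA n \<theta> L x i) (nhds 0)"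
    by (rule affine_ev[OF order_refl g lim])
  have sumY: "(\<Sum>k<n 0. DA n \<theta> L x i k * Y s k) = (\<Sum>k<n 0. DA n \<theta> L x i k * x k) + DA n \<theta> L x i j * s" for s
  proof -
    have "(\<Sum>k<n 0. DA n \<theta> L x i k * Y s k) = (\<Sum>k<n 0. DA n \<theta> L x i k * x k + (if k = j then DA n \<theta> L x i k * s else 0))"
      by (rule sum.cong) (auto simp: Y_def algebra_simps)
    also have "\<dots> = (\<Sum>k<n 0. DA n \<theta> L x i k * x k) + DA n \<theta> L x i j * s"
      using j by (simp add: sum.distrib sum.delta')
    finally show ?thesis .
  qed
  have ev2: "eventually (\<lambda>s. partial_at (net n L \<theta>) x i j s = ((\<Sum>k<n 0. DA n \<theta> L x i k * x k) + CA n \<theta> L x i) + DA n \<theta> L x i j * s) (nhds 0)"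
    using ev
  proof eventually_elim
    case (elim s)
    have "partial_at (net n L \<theta>) x i j s = preact n \<theta> L (Y s) i"
      by (simp add: partial_at_def net_def Y_def)
    with elim i sumY show ?case by simp
  qed
  have d: "((\<lambda>s. ((\<Sum>k<n 0. DA n \<theta> L x i k * x k) + CA n \<theta> L x i) + DA n \<theta> L x i j * s) has_real_derivative DA n \<theta> L x i j) (at 0)"
    by (auto intro!: derivative_eq_intros)
  show ?thesis
    using DERIV_cong_ev[OF refl ev2 refl] d by simp
qed

lemma curve_cont:
  assumes "smooth_curve (n 0) \<gamma>" "k < n 0" "t \<in> {0..1}"
  shows "(\<gamma> k has_real_derivative vderiv (\<gamma> k) t) (at t within {0..1})"
proof -
  obtain D where D: "D 0 = \<gamma> k" "\<forall>r. \<forall>t\<in>{0..1}. (D r has_real_derivative D (Suc r) t) (at t within {0..1})"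
    using assms(1,2) unfolding smooth_curve_def by blast
  have "(\<gamma> k has_real_derivative D 1 t) (at t within {0..1})"
    using D assms(3) by (metis One_nat_def)
  moreover then have "vderiv (\<gamma> k) t = D 1 t" using assms(3) by (rule vderiv_eq[rotated])
  ultimately show ?thesis by simp
qed

lemma curve_good:
  assumes sc: "smooth_curve (n 0) \<gamma>" and t: "t \<in> {0..1}"
    and g: "good n L \<theta> (curve_pt \<gamma> t)" and i: "i < n L"
  shows "vderiv (\<lambda>s. net n L \<theta> (curve_pt \<gamma> s) i) t
       = (\<Sum>k<n 0. DA n \<theta> L (curve_pt \<gamma> t) i k * vderiv (\<gamma> k) t)"
proof -
  let ?x = "curve_pt \<gamma> t"
  have lim: "\<forall>k<n 0. ((\<lambda>s. curve_pt \<gamma> s k) \<longlongrightarrow> ?x k) (at t within {0..1})"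
  proof (intro allI impI)
    fix k assume "k < n 0"
    have "continuous (at t within {0..1}) (\<gamma> k)"
      by (rule DERIV_continuous[OF curve_cont[of n \<gamma> k t, OF sc \<open>k < n 0\<close> t]])
    then show "((\<lambda>s. curve_pt \<gamma> s k) \<longlongrightarrow> curve_pt \<gamma> t k) (at t within {0..1})"
      by (simp add: curve_pt_def continuous_within)
  qed
  have ev: "eventually (\<lambda>s. \<forall>i<n L. preact n \<theta> L (curve_pt \<gamma> s) i = (\<Sum>k<n 0. DA n \<theta> L ?x i k * curve_pt \<gamma> s k) + CA n \<theta> L ?x i) (at t within {0..1})"
    by (rule affine_ev[OF order_refl g lim])
  have atx: "preact n \<theta> L ?x i = (\<Sum>k<n 0. DA n \<theta> L ?x i k * ?x k) + CA n \<theta> L ?x i"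
  proof -
    have "\<forall>k<n 0. ((\<lambda>s. (\<lambda>_::real. ?x) s k) \<longlongrightarrow> ?x k) (principal UNIV)" by simp
    from affine_ev[OF order_refl g this] i show ?thesis by (simp add: eventually_principal)
  qed
  have d: "((\<lambda>s. (\<Sum>k<n 0. DA n \<theta> L ?x i k * \<gamma> k s) + CA n \<theta> L ?x i) has_real_derivative
      (\<Sum>k<n 0. DA n \<theta> L ?x i k * vderiv (\<gamma> k) t)) (at t within {0..1})"
    by (intro derivative_eq_intros DERIV_sum refl) (auto intro!: curve_cont[of n \<gamma> _ t, OF sc _ t] simp: mult.commute)
  have ev2: "eventually (\<lambda>s. net n L \<theta> (curve_pt \<gamma> s) i = (\<Sum>k<n 0. DA n \<theta> L ?x i k * \<gamma> k s) + CA n \<theta> L ?x i) (at t within {0..1})"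
    using ev by eventually_elim (use i in \<open>simp add: net_def curve_pt_def\<close>)
  have "((\<lambda>s. net n L \<theta> (curve_pt \<gamma> s) i) has_real_derivative
      (\<Sum>k<n 0. DA n \<theta> L ?x i k * vderiv (\<gamma> k) t)) (at t within {0..1})"
    using has_field_derivative_cong_eventually[OF ev2] atx d by (simp add: net_def curve_pt_def)
  then show ?thesis by (rule vderiv_eq[OF t])
qed

lemma good_consequences:
  assumes sc: "smooth_curve (n 0) \<gamma>" and t: "t \<in> {0..1}"
    and g: "good n L \<theta> (curve_pt \<gamma> t)"
  shows "jacobian_exists (n 0) (n L) (net n L \<theta>) (curve_pt \<gamma> t)"
    and "vnorm (n L) (\<lambda>i. vderiv (\<lambda>s. net n L \<theta> (curve_pt \<gamma> s) i) t)
         = vnorm (n L) (jac_apply (n 0) (net n L \<theta>) (curve_pt \<gamma> t) (curve_vel \<gamma> t))"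
    and "vnorm (n L) (jac_apply (n 0) (net n L \<theta>) (curve_pt \<gamma> t) (curve_vel \<gamma> t))
         = vnorm (n L) (\<lambda>i. \<Sum>k<n 0. DA n \<theta> L (curve_pt \<gamma> t) i k * vderiv (\<gamma> k) t)"
proof -
  show "jacobian_exists (n 0) (n L) (net n L \<theta>) (curve_pt \<gamma> t)"
    unfolding jacobian_exists_def using jac_good[OF g] real_differentiable_def by blast
  have J: "jacobian (net n L \<theta>) (curve_pt \<gamma> t) i j = DA n \<theta> L (curve_pt \<gamma> t) i j"
    if "i < n L" "j < n 0" for i j
    unfolding jacobian_def using jac_good[OF g that] by (rule DERIV_imp_deriv)
  have E: "jac_apply (n 0) (net n L \<theta>) (curve_pt \<gamma> t) (curve_vel \<gamma> t) i = (\<Sum>k<n 0. DA n \<theta> L (curve_pt \<gamma> t) i k * vderiv (\<gamma> k) t)"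
    if "i < n L" for i
    unfolding jac_apply_def curve_vel_def using J[OF that] by (intro sum.cong) auto
  show "vnorm (n L) (jac_apply (n 0) (net n L \<theta>) (curve_pt \<gamma> t) (curve_vel \<gamma> t))
         = vnorm (n L) (\<lambda>i. \<Sum>k<n 0. DA n \<theta> L (curve_pt \<gamma> t) i k * vderiv (\<gamma> k) t)"
    unfolding vnorm_def using E by (intro arg_cong[where f=sqrt] sum.cong) auto
  moreover have "vnorm (n L) (\<lambda>i. vderiv (\<lambda>s. net n L \<theta> (curve_pt \<gamma> s) i) t)
      = vnorm (n L) (\<lambda>i. \<Sum>k<n 0. DA n \<theta> L (curve_pt \<gamma> t) i k * vderiv (\<gamma> k) t)"
    unfolding vnorm_def using curve_good[OF sc t g] by (intro arg_cong[where f=sqrt] sum.cong) auto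
  ultimately show "vnorm (n L) (\<lambda>i. vderiv (\<lambda>s. net n L \<theta> (curve_pt \<gamma> s) i) t)
         = vnorm (n L) (jac_apply (n 0) (net n L \<theta>) (curve_pt \<gamma> t) (curve_vel \<gamma> t))" by simp
qed



lemma tangent_pow:
  fixes a r :: real assumes "0 \<le> a" "0 \<le> r" "1 \<le> m"
  shows "r ^ m + real m * r ^ (m - 1) * a \<le> a ^ m + real m * r ^ m"
proof (cases "r = 0")
  case True then show ?thesis using assms by (cases "m = 1") (auto simp: power_0_left)
next
  case False
  then have r: "r > 0" using assms by simp
  have "1 + real m * ((a - r) / r) \<le> (1 + (a - r) / r) ^ m"
    by (rule Bernoulli_inequality) (use r assms in \<open>simp add: field_simps\<close>)
  also have "1 + (a - r) / r = a / r" using r by (simp add: field_simps)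
  finally have "r ^ m * (1 + real m * ((a - r) / r)) \<le> r ^ m * (a / r) ^ m"
    using r by (intro mult_left_mono) auto
  also have "r ^ m * (a / r) ^ m = a ^ m" using r by (simp add: power_divide)
  also have "r ^ m * (1 + real m * ((a - r) / r)) = r ^ m + real m * (r ^ m / r) * a - real m * r ^ m"
    using r by (simp add: field_simps)
  also have "r ^ m / r = r ^ (m - 1)" using r assms
    by (metis One_nat_def Suc_le_eq power_minus_mult nonzero_mult_div_cancel_right less_numeral_extra(3) neq0_conv)
  finally show ?thesis by simp
qed

lemma jensen01:
  fixes f :: "real \<Rightarrow> real"
  assumes f: "f \<in> borel_measurable lborel" and nn: "\<And>t. 0 \<le> f t" and m: "1 \<le> m"
  shows "(\<integral>\<^sup>+ t\<in>{0..1}. ennreal (f t) \<partial>lborel) ^ m \<le> (\<integral>\<^sup>+ t\<in>{0..1}. ennreal (f t ^ m) \<partial>lborel)"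
proof -
  let ?c = "\<integral>\<^sup>+ t\<in>{0..1}. ennreal (f t) \<partial>lborel"
  let ?R = "\<integral>\<^sup>+ t\<in>{0..1}. ennreal (f t ^ m) \<partial>lborel"
  have one: "(\<integral>\<^sup>+ t. c * indicator {0..1::real} t \<partial>lborel) = c" for c
    by (simp add: nn_integral_cmult_indicator)
  show ?thesis
  proof (cases "?c = \<infinity>")
    case True
    have le: "ennreal (f t) * indicator {0..1} t \<le> (1 * indicator {0..1} t) + ennreal (f t ^ m) * indicator {0..1} t" for t
    proof -
      have "f t \<le> 1 + f t ^ m"
      proof (cases "f t \<le> 1")
        case True then show ?thesis using nn[of t] by (simp add: add_increasing2)
      next
        case False
        then have "f t ^ 1 \<le> f t ^ m" using m by (intro power_increasing) auto
        then show ?thesis by simp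
      qed
      then have "ennreal (f t) \<le> ennreal (1 + f t ^ m)" by (rule ennreal_leI)
      then have "ennreal (f t) \<le> 1 + ennreal (f t ^ m)"
        using nn[of t] by (simp add: ennreal_plus)
      then show ?thesis by (cases "t \<in> {0..1}") auto
    qed
    have "?c \<le> (\<integral>\<^sup>+ t. (1 * indicator {0..1} t) + ennreal (f t ^ m) * indicator {0..1} t \<partial>lborel)"
      by (rule nn_integral_mono) (rule le)
    also have "\<dots> = 1 + ?R"
      using f by (subst nn_integral_add) (auto simp: one)
    finally have "1 + ?R = \<infinity>" using True by (simp add: top_unique)
    then have "?R = \<infinity>" by (simp add: ennreal_add_eq_top)
    then show ?thesis by simp
  next
    case False
    then obtain r where r: "?c = ennreal r" "0 \<le> r" by (cases ?c) auto
    have pw: "(ennreal (r ^ m) + ennreal (real m * r ^ (m - 1)) * ennreal (f t)) * indicator {0..1} t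
        \<le> (ennreal (f t ^ m) + ennreal (real m * r ^ m)) * indicator {0..1} t" for t
    proof -
      have "ennreal (r ^ m) + ennreal (real m * r ^ (m - 1)) * ennreal (f t) = ennreal (r ^ m + real m * r ^ (m - 1) * f t)"
        using r nn[of t] by (simp add: ennreal_mult ennreal_plus)
      also have "\<dots> \<le> ennreal (f t ^ m + real m * r ^ m)"
        using tangent_pow[OF nn[of t] r(2) m] by (rule ennreal_leI)
      also have "\<dots> = ennreal (f t ^ m) + ennreal (real m * r ^ m)"
        using r nn[of t] by (simp add: ennreal_plus)
      finally show ?thesis by (cases "t \<in> {0..1}") auto
    qed
    have "(\<integral>\<^sup>+ t. (ennreal (r ^ m) + ennreal (real m * r ^ (m - 1)) * ennreal (f t)) * indicator {0..1} t \<partial>lborel)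
        = ennreal (r ^ m) + ennreal (real m * r ^ (m - 1)) * ?c"
      using f by (simp add: distrib_right nn_integral_add nn_integral_cmult one mult.assoc)
    also have "\<dots> = ennreal (r ^ m) + ennreal (real m * r ^ m)"
    proof -
      have e: "r ^ (m - 1) * r = r ^ m" using m by (cases m) auto
      have "ennreal (real m * r ^ (m - 1)) * ?c = ennreal (real m * r ^ (m - 1) * r)"
        using r by (simp add: ennreal_mult)
      also have "real m * r ^ (m - 1) * r = real m * r ^ m" using e by (simp add: mult.assoc)
      finally show ?thesis by simp
    qed
    finally have L: "(\<integral>\<^sup>+ t. (ennreal (r ^ m) + ennreal (real m * r ^ (m - 1)) * ennreal (f t)) * indicator {0..1} t \<partial>lborel)
        = ennreal (r ^ m) + ennreal (real m * r ^ m)" .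
    have Rr: "(\<integral>\<^sup>+ t. (ennreal (f t ^ m) + ennreal (real m * r ^ m)) * indicator {0..1} t \<partial>lborel)
        = ?R + ennreal (real m * r ^ m)"
      using f by (simp add: distrib_right nn_integral_add one)
    have "(\<integral>\<^sup>+ t. (ennreal (r ^ m) + ennreal (real m * r ^ (m - 1)) * ennreal (f t)) * indicator {0..1} t \<partial>lborel)
       \<le> (\<integral>\<^sup>+ t. (ennreal (f t ^ m) + ennreal (real m * r ^ m)) * indicator {0..1} t \<partial>lborel)"
      by (rule nn_integral_mono) (rule pw)
    then have "ennreal (real m * r ^ m) + ennreal (r ^ m) \<le> ennreal (real m * r ^ m) + ?R"
      unfolding L Rr by (simp add: add.commute)
    then have "ennreal (r ^ m) \<le> ?R"
      unfolding ennreal_add_left_cancel_le by simp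
    then show ?thesis using r by (simp add: ennreal_power)
  qed
qed



lemma comp_meas:
  assumes "\<And>i. i \<in> I \<Longrightarrow> sets (M i) = sets borel"
  shows "(\<lambda>\<theta>. \<theta> p) \<in> borel_measurable (PiM I (M :: 'i \<Rightarrow> real measure))"
proof (cases "p \<in> I")
  case True
  have "(\<lambda>\<theta>. \<theta> p) \<in> measurable (PiM I M) (M p)" by (rule measurable_component_singleton[OF True])
  then show ?thesis using assms[OF True] by (simp cong: measurable_cong_sets)
next
  case False
  show ?thesis
  proof -
    have "(\<lambda>\<theta>. \<theta> p) \<in> borel_measurable (PiM I M) \<longleftrightarrow> (\<lambda>_. undefined :: real) \<in> borel_measurable (PiM I M)"
    proof (rule measurable_cong)
      fix w assume "w \<in> space (PiM I M)"
      then show "w p = undefined" using False unfolding space_PiM by (rule PiE_arb)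
    qed
    then show ?thesis by simp
  qed
qed

lemma preact_meas:
  assumes T: "\<And>p. (\<lambda>b. \<Theta> b p) \<in> borel_measurable N"
    and X: "\<And>k. (\<lambda>b. X b k) \<in> borel_measurable N"
  shows "(\<lambda>b. preact n (\<Theta> b) l (X b) j) \<in> borel_measurable N"
proof (induction l arbitrary: j)
  case 0 then show ?case using X by simp
next
  case (Suc l)
  have r: "(\<lambda>b. relu (preact n (\<Theta> b) l (X b) k)) \<in> borel_measurable N" for k
    unfolding relu_def using Suc.IH by measurable
  show ?case
    using T X r by (simp del: preact.simps add: preact.simps(2))
qed

lemma DA_meas:
  assumes T: "\<And>p. (\<lambda>b. \<Theta> b p) \<in> borel_measurable N"
    and X: "\<And>k. (\<lambda>b. X b k) \<in> borel_measurable N"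
  shows "(\<lambda>b. DA n (\<Theta> b) l (X b) j k) \<in> borel_measurable N"
proof (induction l arbitrary: j k)
  case 0 then show ?case by simp
next
  case (Suc l)
  have p: "(\<lambda>b. preact n (\<Theta> b) l (X b) k') \<in> borel_measurable N" for k'
    by (rule preact_meas[OF T X])
  have i: "(\<lambda>b. if l = 0 then DA n (\<Theta> b) 0 (X b) k' k else if 0 < preact n (\<Theta> b) l (X b) k' then DA n (\<Theta> b) l (X b) k' k else 0) \<in> borel_measurable N" for k'
  proof (cases "l = 0")
    case True then show ?thesis by simp
  next
    case False
    note [measurable] = p Suc.IH
    show ?thesis using False by (simp; measurable)
  qed
  show ?case
    using T i by (simp del: DA.simps add: DA.simps(2))
qed

lemma finite_param_index: "finite (param_index n L)"
proof -
  have "param_index n L \<subseteq> Inl ` ({..L} \<times> (\<Union>l\<le>L. {..<n l}) \<times> (\<Union>l\<le>L. {..<n l})) \<union> Inr ` ({..L} \<times> (\<Union>l\<le>L. {..<n l}))"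
    unfolding param_index_def by (force simp: diff_le_self)
  moreover have "finite (Inl ` ({..L} \<times> (\<Union>l\<le>L. {..<n l}) \<times> (\<Union>l\<le>L. {..<n l})) \<union> Inr ` ({..L} \<times> (\<Union>l\<le>L. {..<n l})))"
    by auto
  ultimately show ?thesis by (rule finite_subset)
qed

fun layer :: "param_idx \<Rightarrow> nat" where
  "layer (Inl (l, i, j)) = l" | "layer (Inr (l, j)) = l"

lemma preact_local:
  assumes "\<And>p. layer p \<le> l \<Longrightarrow> \<theta> p = \<theta>' p"
  shows "preact n \<theta> l x = preact n \<theta>' l x"
  using assms
proof (induction l)
  case 0 then show ?case by simp
next
  case (Suc l)
  have eq: "preact n \<theta> l x = preact n \<theta>' l x" using Suc by simp
  show ?case by (simp only: preact.simps eq) (simp add: Suc.prems)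
qed



lemma null_hyper:
  fixes M :: "'i \<Rightarrow> real measure"
  assumes P: "\<And>i. prob_space (M i)" and fin: "finite I" and p: "p \<in> I"
    and f: "f \<in> borel_measurable (PiM I M)"
    and inv: "\<And>\<theta> y. f (\<theta>(p := y)) = f \<theta>"
    and at: "\<And>a. emeasure (M p) {a} = 0"
    and sb: "\<And>i. sets (M i) = sets borel"
  shows "AE \<theta> in PiM I M. f \<theta> + \<theta> p \<noteq> 0"
proof -
  interpret product_prob_space M I
    by (simp add: product_prob_space_def product_prob_space_axioms_def product_sigma_finite_def P prob_space_imp_sigma_finite)
  define J where "J = I - {p}"
  have IJ: "I = insert p J" and pJ: "p \<notin> J" and finJ: "finite J" using p fin by (auto simp: J_def)
  define B where "B = {\<theta> \<in> space (PiM I M). f \<theta> + \<theta> p = 0}"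
  have cm: "(\<lambda>\<theta>. \<theta> p) \<in> borel_measurable (PiM I M)"
    by (rule comp_meas) (simp add: sb)
  have Bs: "B \<in> sets (PiM I M)"
    unfolding B_def using f cm by measurable
  have spp: "space (M p) = UNIV" using sets_eq_imp_space_eq[OF sb[of p]] by simp
  have "emeasure (PiM I M) B = (\<integral>\<^sup>+ \<theta>. indicator B \<theta> \<partial>PiM (insert p J) M)"
    using Bs IJ by simp
  also have "\<dots> = (\<integral>\<^sup>+ x. (\<integral>\<^sup>+ y. indicator B (x(p := y)) \<partial>M p) \<partial>PiM J M)"
    by (rule product_nn_integral_insert[OF finJ pJ]) (use Bs IJ in simp)
  also have "\<dots> = (\<integral>\<^sup>+ x. 0 \<partial>PiM J M)"
  proof (rule nn_integral_cong)
    fix x assume x: "x \<in> space (PiM J M)"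
    have "indicator B (x(p := y)) = (indicator {- f x} y :: ennreal)" for y
    proof -
      have "x(p := y) \<in> space (PiM I M)"
        unfolding IJ space_PiM using x spp by (intro PiE_fun_upd) (auto simp: space_PiM)
      then show ?thesis by (auto simp: B_def inv indicator_def)
    qed
    then have "(\<integral>\<^sup>+ y. indicator B (x(p := y)) \<partial>M p) = (\<integral>\<^sup>+ y. indicator {- f x} y \<partial>M p)" by simp
    also have "\<dots> = emeasure (M p) {- f x}" by (rule nn_integral_indicator) (simp add: sb)
    also have "\<dots> = 0" by (rule at)
    finally show "(\<integral>\<^sup>+ y. indicator B (x(p := y)) \<partial>M p) = 0" .
  qed
  also have "\<dots> = 0" by simp
  finally have "B \<in> null_sets (PiM I M)" using Bs by (rule null_setsI)
  then show ?thesis by (rule AE_I') (auto simp: B_def)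
qed

definition Mx :: "(nat \<Rightarrow> nat) \<Rightarrow> nat \<Rightarrow> real \<Rightarrow> param_idx \<Rightarrow> real measure" where
  "Mx n L Cb p = density lborel (normal_density 0 (if p \<in> param_index n L then sqrt (param_var n L Cb p) else 1))"

lemma var_pos:
  assumes "\<forall>l\<le>L. 1 \<le> n l" "0 < Cb" "p \<in> param_index n L"
  shows "0 < param_var n L Cb p"
proof -
  have "0 < n (l - 1)" if "l \<le> L" for l using assms(1) that by (metis diff_le_self le_trans less_one not_le)
  moreover have "1 \<le> n (L - 1)" by (rule assms(1)[rule_format]) simp
  ultimately show ?thesis using assms(2,3) unfolding param_index_def param_var_def by auto
qed

lemma Mx_prob: assumes "\<forall>l\<le>L. 1 \<le> n l" "0 < Cb" shows "prob_space (Mx n L Cb p)"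
  unfolding Mx_def using var_pos[OF assms] by (intro prob_space_normal_density) auto

lemma Mx_sets: "sets (Mx n L Cb p) = sets borel"
  unfolding Mx_def by simp

lemma Mx_atom: "emeasure (Mx n L Cb p) {a} = 0"
proof -
  let ?f = "\<lambda>x. ennreal (normal_density 0 (if p \<in> param_index n L then sqrt (param_var n L Cb p) else 1) x)"
  have ae: "AE x in lborel. x \<in> {a} \<longrightarrow> ?f x = 0"
    using AE_lborel_singleton[of a] by eventually_elim auto
  have "{a} \<in> null_sets (density lborel ?f)"
    by (subst null_sets_density_iff) (use ae in auto)
  then have "{a} \<in> null_sets (Mx n L Cb p)"
    unfolding Mx_def by simp
  then show ?thesis by (simp add: null_sets_def)
qed

lemma relu_net_Mx: "relu_net_measure n L Cb = PiM (param_index n L) (Mx n L Cb)"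
  unfolding relu_net_measure_def Mx_def by (rule PiM_cong) auto

lemma good_AE:
  assumes "\<forall>l\<le>L. 1 \<le> n l" "0 < Cb"
  shows "AE \<theta> in relu_net_measure n L Cb. good n L \<theta> x"
proof -
  let ?I = "param_index n L"
  let ?M = "PiM ?I (Mx n L Cb)"
  have fin: "finite {(l, k). 1 \<le> l \<and> l < L \<and> k < n l}"
    by (rule finite_subset[of _ "{..<L} \<times> (\<Union>l<L. {..<n l})"]) auto
  have one: "AE \<theta> in ?M. preact n \<theta> l x k \<noteq> 0" if lk: "1 \<le> l" "l < L" "k < n l" for l k
  proof -
    obtain l' where l': "l = Suc l'" using lk by (cases l) auto
    define f where "f = (\<lambda>\<theta>. \<Sum>k'<n l'. \<theta> (Inl (Suc l', k, k')) * (if l' = 0 then x k' else relu (preact n \<theta> l' x k')))"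
    let ?p = "Inr (Suc l', k)"
    have pI: "?p \<in> ?I" using lk l' unfolding param_index_def by auto
    have cm: "\<And>q. (\<lambda>\<theta>. \<theta> q) \<in> borel_measurable ?M" by (rule comp_meas) (simp add: Mx_sets)
    have fm: "f \<in> borel_measurable ?M"
    proof -
      have "(\<lambda>\<theta>. preact n \<theta> l' x k') \<in> borel_measurable ?M" for k'
        using preact_meas[of "\<lambda>\<theta>. \<theta>" ?M "\<lambda>_. x"] cm by simp
      then show ?thesis unfolding f_def relu_def using cm by measurable
    qed
    have inv: "f (\<theta>(?p := y)) = f \<theta>" for \<theta> y
    proof -
      have "preact n (\<theta>(?p := y)) l' x = preact n \<theta> l' x"
        by (rule preact_local) auto
      then show ?thesis unfolding f_def by (simp only: fun_upd_apply) simp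
    qed
    have "AE \<theta> in ?M. f \<theta> + \<theta> ?p \<noteq> 0"
      by (rule null_hyper[OF Mx_prob[OF assms] finite_param_index pI fm inv Mx_atom Mx_sets])
    moreover have "preact n \<theta> l x k = f \<theta> + \<theta> ?p" for \<theta> unfolding f_def l' by simp
    ultimately show ?thesis by simp
  qed
  have "AE \<theta> in ?M. \<forall>lk\<in>{(l, k). 1 \<le> l \<and> l < L \<and> k < n l}. preact n \<theta> (fst lk) x (snd lk) \<noteq> 0"
    by (rule AE_finite_allI[OF fin]) (use one in auto)
  then show ?thesis unfolding relu_net_Mx good_def by (auto elim!: eventually_mono)
qed



lemma preact_xloc:
  assumes "\<And>k. k < n 0 \<Longrightarrow> x k = y k" "1 \<le> l"
  shows "preact n \<theta> l x = preact n \<theta> l y"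
  using assms(2)
proof (induction l)
  case 0 then show ?case by simp
next
  case (Suc l)
  show ?case
  proof (cases "l = 0")
    case True then show ?thesis using assms(1) by (simp add: fun_eq_iff)
  next
    case False
    then have eq: "preact n \<theta> l x = preact n \<theta> l y" using Suc by simp
    show ?thesis by (simp only: preact.simps eq) (simp add: False)
  qed
qed

lemma DA_xloc:
  assumes "\<And>k. k < n 0 \<Longrightarrow> x k = y k"
  shows "DA n \<theta> l x = DA n \<theta> l y"
proof (induction l)
  case 0 then show ?case by (simp add: fun_eq_iff)
next
  case (Suc l)
  show ?case
  proof (cases "l = 0")
    case True then show ?thesis by (simp add: fun_eq_iff)
  next
    case False
    then have eq: "preact n \<theta> l x = preact n \<theta> l y" using assms by (intro preact_xloc) auto
    show ?thesis by (simp only: DA.simps eq Suc.IH)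
  qed
qed

lemma good_xloc:
  assumes "\<And>k. k < n 0 \<Longrightarrow> x k = y k"
  shows "good n L \<theta> x = good n L \<theta> y"
  unfolding good_def using preact_xloc[OF assms] by auto

lemma good_meas:
  assumes T: "\<And>p. (\<lambda>b. \<Theta> b p) \<in> borel_measurable N"
    and X: "\<And>k. (\<lambda>b. X b k) \<in> borel_measurable N"
  shows "Measurable.pred N (\<lambda>b. good n L (\<Theta> b) (X b))"
proof -
  have [measurable]: "(\<lambda>b. preact n (\<Theta> b) l (X b) k) \<in> borel_measurable N" for l k
    by (rule preact_meas[OF T X])
  have eq: "good n L (\<Theta> b) (X b) \<longleftrightarrow> (\<forall>l\<in>{1..<L}. \<forall>k\<in>{..<n l}. preact n (\<Theta> b) l (X b) k \<noteq> 0)" for b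
    unfolding good_def by auto
  have p: "Measurable.pred N (\<lambda>b. preact n (\<Theta> b) l (X b) k \<noteq> 0)" for l k
    by measurable
  show ?thesis unfolding eq
    by (intro pred_intros_finite(3) finite_atLeastLessThan finite_lessThan p)
qed



theorem lemma2:
  fixes L :: nat and n :: "nat \<Rightarrow> nat" and Cb :: real
    and \<gamma> :: "nat \<Rightarrow> real \<Rightarrow> real" and m :: nat
  assumes "1 \<le> L" and "\<forall>l\<le>L. 1 \<le> n l" and "0 < Cb"
    and "smooth_curve (n 0) \<gamma>" and "unit_speed (n 0) \<gamma>"
    and "1 \<le> m"
  shows "(\<forall>t\<in>{0..1}. AE \<theta> in relu_net_measure n L Cb.
            jacobian_exists (n 0) (n L) (net n L \<theta>) (curve_pt \<gamma> t))
       \<and> (\<integral>\<^sup>+ \<theta>. (image_len (n L) (net n L \<theta>) \<gamma>) ^ m \<partial>relu_net_measure n L Cb)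
         \<le> (\<integral>\<^sup>+ t\<in>{0..1}.
               (\<integral>\<^sup>+ \<theta>. ennreal ((vnorm (n L)
                    (jac_apply (n 0) (net n L \<theta>) (curve_pt \<gamma> t) (curve_vel \<gamma> t))) ^ m)
                 \<partial>relu_net_measure n L Cb) \<partial>lborel)"
proof -
  note nL = assms(2) and Cb = assms(3) and sc = assms(4) and m = assms(6)
  let ?M = "relu_net_measure n L Cb"
  have Mprob: "prob_space ?M" unfolding relu_net_Mx by (rule prob_space_PiM) (rule Mx_prob[OF nL Cb])
  interpret P: pair_sigma_finite lborel ?M
    unfolding pair_sigma_finite_def using Mprob sigma_finite_lborel by (simp add: prob_space_imp_sigma_finite)
  have compM: "\<And>p. (\<lambda>\<theta>. \<theta> p) \<in> borel_measurable ?M" unfolding relu_net_Mx by (rule comp_meas) (simp add: Mx_sets)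
  define DD where "DD = (\<lambda>k. SOME D :: nat \<Rightarrow> real \<Rightarrow> real. D 0 = \<gamma> k \<and>
        (\<forall>r. \<forall>t\<in>{0..1}. (D r has_real_derivative D (Suc r) t) (at t within {0..1})))"
  have DD: "DD k 0 = \<gamma> k \<and> (\<forall>r. \<forall>t\<in>{0..1}. (DD k r has_real_derivative DD k (Suc r) t) (at t within {0..1}))"
    if "k < n 0" for k
  proof -
    have "\<exists>D :: nat \<Rightarrow> real \<Rightarrow> real. D 0 = \<gamma> k \<and>
        (\<forall>r. \<forall>t\<in>{0..1}. (D r has_real_derivative D (Suc r) t) (at t within {0..1}))"
      using sc that unfolding smooth_curve_def by blast
    then show ?thesis unfolding DD_def by (rule someI_ex)
  qed
  define c where "c = (\<lambda>t::real. max 0 (min 1 t))"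
  have c01: "c t = t" if "t \<in> {0..1}" for t using that by (auto simp: c_def)
  have cin: "c t \<in> {0..1}" for t by (auto simp: c_def)
  have ccont: "continuous_on UNIV c" unfolding c_def by (intro continuous_intros)
  have contDD: "continuous_on UNIV (\<lambda>t. DD k r (c t))" if "k < n 0" for k r
  proof -
    have "continuous_on {0..1} (DD k r)"
      by (rule DERIV_continuous_on) (use DD[OF that] in blast)
    then show ?thesis by (rule continuous_on_compose2[OF _ ccont]) (use cin in auto)
  qed
  define Xc where "Xc = (\<lambda>t k. if k < n 0 then DD k 0 (c t) else 0)"
  define Vc where "Vc = (\<lambda>t k. if k < n 0 then DD k 1 (c t) else 0)"
  define h where "h = (\<lambda>t \<theta>. vnorm (n L) (\<lambda>i. \<Sum>k<n 0. DA n \<theta> L (Xc t) i k * Vc t k))"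
  have measX: "(\<lambda>t. Xc t k) \<in> borel_measurable borel" for k
    unfolding Xc_def using contDD[of k 0] by (cases "k < n 0") (auto intro: borel_measurable_continuous_onI)
  have measV: "(\<lambda>t. Vc t k) \<in> borel_measurable borel" for k
    unfolding Vc_def using contDD[of k 1] by (cases "k < n 0") (auto intro: borel_measurable_continuous_onI)
  have Xc_eq: "Xc t k = curve_pt \<gamma> t k" if "t \<in> {0..1}" "k < n 0" for t k
    using DD[OF that(2)] c01[OF that(1)] that(2) by (simp add: Xc_def curve_pt_def)
  have Vc_eq: "Vc t k = vderiv (\<gamma> k) t" if "t \<in> {0..1}" "k < n 0" for t k
  proof -
    have "(\<gamma> k has_real_derivative DD k 1 t) (at t within {0..1})"
      using DD[OF that(2)] that(1) by (metis One_nat_def)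
    then have "vderiv (\<gamma> k) t = DD k 1 t" by (rule vderiv_eq[OF that(1)])
    then show ?thesis using c01[OF that(1)] that(2) by (simp add: Vc_def)
  qed
  have good_eq: "good n L \<theta> (Xc t) = good n L \<theta> (curve_pt \<gamma> t)" if "t \<in> {0..1}" for t \<theta>
    by (rule good_xloc) (rule Xc_eq[OF that])
  have key: "vnorm (n L) (\<lambda>i. vderiv (\<lambda>s. net n L \<theta> (curve_pt \<gamma> s) i) t) = h t \<theta>
           \<and> vnorm (n L) (jac_apply (n 0) (net n L \<theta>) (curve_pt \<gamma> t) (curve_vel \<gamma> t)) = h t \<theta>"
    if t: "t \<in> {0..1}" and g: "good n L \<theta> (curve_pt \<gamma> t)" for t \<theta>
  proof -
    have "DA n \<theta> L (Xc t) = DA n \<theta> L (curve_pt \<gamma> t)" by (rule DA_xloc) (rule Xc_eq[OF t])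
    then have "h t \<theta> = vnorm (n L) (\<lambda>i. \<Sum>k<n 0. DA n \<theta> L (curve_pt \<gamma> t) i k * vderiv (\<gamma> k) t)"
    proof -
      have "(\<lambda>i. \<Sum>k<n 0. DA n \<theta> L (curve_pt \<gamma> t) i k * Vc t k) = (\<lambda>i. \<Sum>k<n 0. DA n \<theta> L (curve_pt \<gamma> t) i k * vderiv (\<gamma> k) t)"
        by (intro ext sum.cong) (auto simp: Vc_eq[OF t])
      then show ?thesis unfolding h_def using \<open>DA n \<theta> L (Xc t) = DA n \<theta> L (curve_pt \<gamma> t)\<close> by simp
    qed
    then show ?thesis using good_consequences(2,3)[OF sc t g] by simp
  qed
  have h_nn: "0 \<le> h t \<theta>" for t \<theta> unfolding h_def vnorm_def by (simp add: sum_nonneg)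
  have hmeas: "(\<lambda>b. h (fst b) (snd b)) \<in> borel_measurable (lborel \<Otimes>\<^sub>M ?M)"
  proof -
    have T: "\<And>p. (\<lambda>b. snd b p) \<in> borel_measurable (lborel \<Otimes>\<^sub>M ?M)"
      using compM by measurable
    have X: "\<And>k. (\<lambda>b. Xc (fst b) k) \<in> borel_measurable (lborel \<Otimes>\<^sub>M ?M)"
      using measX by measurable
    have V: "\<And>k. (\<lambda>b. Vc (fst b) k) \<in> borel_measurable (lborel \<Otimes>\<^sub>M ?M)"
      using measV by measurable
    have [measurable]: "(\<lambda>b. DA n (snd b) L (Xc (fst b)) i k) \<in> borel_measurable (lborel \<Otimes>\<^sub>M ?M)" for i k
      by (rule DA_meas[OF T X])
    show ?thesis unfolding h_def vnorm_def using V by measurable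
  qed
  have hmeas_t: "(\<lambda>t. h t \<theta>) \<in> borel_measurable lborel" for \<theta>
  proof -
    have [measurable]: "(\<lambda>t. DA n \<theta> L (Xc t) i k) \<in> borel_measurable lborel" for i k
      using DA_meas[of "\<lambda>_. \<theta>" lborel Xc] measX by simp
    show ?thesis unfolding h_def vnorm_def using measV by measurable
  qed
  have conj1: "\<forall>t\<in>{0..1}. AE \<theta> in ?M. jacobian_exists (n 0) (n L) (net n L \<theta>) (curve_pt \<gamma> t)"
  proof
    fix t :: real assume t: "t \<in> {0..1}"
    show "AE \<theta> in ?M. jacobian_exists (n 0) (n L) (net n L \<theta>) (curve_pt \<gamma> t)"
      using good_AE[OF nL Cb, of "curve_pt \<gamma> t"] by eventually_elim (rule good_consequences(1)[where n=n and \<gamma>=\<gamma> and L=L, OF sc t])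
  qed
  have AEgood: "AE \<theta> in ?M. AE t in lborel. t \<in> {0..1} \<longrightarrow> good n L \<theta> (Xc t)"
  proof -
    have "AE t in lborel. AE \<theta> in ?M. t \<in> {0..1} \<longrightarrow> good n L \<theta> (Xc t)"
    proof (rule AE_I2)
      fix t :: real
      show "AE \<theta> in ?M. t \<in> {0..1} \<longrightarrow> good n L \<theta> (Xc t)"
        using good_AE[OF nL Cb, of "Xc t"] by eventually_elim simp
    qed
    moreover have "{x \<in> space (lborel \<Otimes>\<^sub>M ?M). fst x \<in> {0..1} \<longrightarrow> good n L (snd x) (Xc (fst x))} \<in> sets (lborel \<Otimes>\<^sub>M ?M)"
    proof -
      have T: "\<And>p. (\<lambda>b. snd b p) \<in> borel_measurable (lborel \<Otimes>\<^sub>M ?M)"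
        using compM by measurable
      have X: "\<And>k. (\<lambda>b. Xc (fst b) k) \<in> borel_measurable (lborel \<Otimes>\<^sub>M ?M)"
        using measX by measurable
      have [measurable]: "Measurable.pred (lborel \<Otimes>\<^sub>M ?M) (\<lambda>b. good n L (snd b) (Xc (fst b)))"
        by (rule good_meas[OF T X])
      have "Measurable.pred (lborel \<Otimes>\<^sub>M ?M) (\<lambda>x. fst x \<in> {0..1} \<longrightarrow> good n L (snd x) (Xc (fst x)))"
        by measurable
      then show ?thesis by (simp add: pred_def)
    qed
    ultimately show ?thesis using P.AE_commute[where P="\<lambda>t \<theta>. t \<in> {0..1} \<longrightarrow> good n L \<theta> (Xc t)"] by simp
  qed
  have A: "AE \<theta> in ?M. image_len (n L) (net n L \<theta>) \<gamma> ^ m \<le> (\<integral>\<^sup>+ t. ennreal (h t \<theta> ^ m) * indicator {0..1} t \<partial>lborel)"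
    using AEgood
  proof eventually_elim
    case (elim \<theta>)
    have "image_len (n L) (net n L \<theta>) \<gamma> = (\<integral>\<^sup>+ t\<in>{0..1}. ennreal (h t \<theta>) \<partial>lborel)"
      unfolding image_len_def
    proof (rule nn_integral_cong_AE)
      show "AE t in lborel. ennreal (vnorm (n L) (\<lambda>i. vderiv (\<lambda>s. net n L \<theta> (curve_pt \<gamma> s) i) t)) * indicator {0..1} t
            = ennreal (h t \<theta>) * indicator {0..1} t"
        using elim
      proof eventually_elim
        case (elim t)
        show ?case
        proof (cases "t \<in> {0..1}")
          case True
          then have "good n L \<theta> (curve_pt \<gamma> t)" using elim good_eq by blast
          then show ?thesis using key[OF True] by simp
        qed simp
      qed
    qed
    also have "\<dots> ^ m \<le> (\<integral>\<^sup>+ t\<in>{0..1}. ennreal (h t \<theta> ^ m) \<partial>lborel)"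
      by (rule jensen01[OF hmeas_t h_nn m])
    finally show ?case by (simp add: power_mono)
  qed
  have "(\<integral>\<^sup>+ \<theta>. (image_len (n L) (net n L \<theta>) \<gamma>) ^ m \<partial>?M)
      \<le> (\<integral>\<^sup>+ \<theta>. (\<integral>\<^sup>+ t. ennreal (h t \<theta> ^ m) * indicator {0..1} t \<partial>lborel) \<partial>?M)"
    by (rule nn_integral_mono_AE[OF A])
  also have "\<dots> = (\<integral>\<^sup>+ t. (\<integral>\<^sup>+ \<theta>. ennreal (h t \<theta> ^ m) * indicator {0..1} t \<partial>?M) \<partial>lborel)"
    by (rule P.Fubini') (use hmeas in measurable)
  also have "\<dots> = (\<integral>\<^sup>+ t\<in>{0..1}.
               (\<integral>\<^sup>+ \<theta>. ennreal ((vnorm (n L)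
                    (jac_apply (n 0) (net n L \<theta>) (curve_pt \<gamma> t) (curve_vel \<gamma> t))) ^ m)
                 \<partial>?M) \<partial>lborel)"
  proof (rule nn_integral_cong)
    fix t :: real
    show "(\<integral>\<^sup>+ \<theta>. ennreal (h t \<theta> ^ m) * indicator {0..1} t \<partial>?M) =
       (\<integral>\<^sup>+ \<theta>. ennreal ((vnorm (n L) (jac_apply (n 0) (net n L \<theta>) (curve_pt \<gamma> t) (curve_vel \<gamma> t))) ^ m) \<partial>?M) * indicator {0..1} t"
    proof (cases "t \<in> {0..1}")
      case True
      have "(\<integral>\<^sup>+ \<theta>. ennreal (h t \<theta> ^ m) \<partial>?M) =
         (\<integral>\<^sup>+ \<theta>. ennreal ((vnorm (n L) (jac_apply (n 0) (net n L \<theta>) (curve_pt \<gamma> t) (curve_vel \<gamma> t))) ^ m) \<partial>?M)"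
        by (rule nn_integral_cong_AE)
           (use good_AE[OF nL Cb, of "curve_pt \<gamma> t"] in \<open>eventually_elim, use key[OF True] in simp\<close>)
      then show ?thesis using True by simp
    qed simp
  qed
  finally show ?thesis using conj1 by simp
qed


end
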